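(* Let $A$ be a nontrivial MV-algebra (i.e. $0\ne 1$) and $\operatorname{Der}(A)$ the set of $(\odot,\vee)$-derivations on $A$. Then: (1) $|\operatorname{Der}(A)|=2$ iff $|A|=2$; (2) $|\operatorname{Der}(A)|=5$ iff $|A|=3$; (3) $|\operatorname{Der}(A)|=9$ iff $|A|=4$.
   Context: An MV-algebra is an algebra $(A,\oplus,{}^*,0)$ of type $(2,1,0)$ satisfying: $x\oplus(y\oplus z)=(x\oplus y)\oplus z$, $x\oplus y=y\oplus x$, $x\oplus 0=x$, $x^{**}=x$, $x\oplus 0^*=0^*$, $(x^*\oplus y)^*\oplus y=(y^*\oplus x)^*\oplus x$. Put $1=0^*$ and $x\odot y=(x^*\oplus y^* )^*$. The natural order is $x\le y$ iff $x^*\oplus y=1$, with lattice operations $x\vee y=(x\odot y^* )\oplus y$, $x\wedge y=x\odot(x^*\oplus y)$. A $(\odot,\vee)$-derivation on $A$ is a map $d:A\to A$ with $d(x\odot y)=(d(x)\odot y)\vee(x\odot d(y))$ for all $x,y\in A$. *)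

theory Defs
  imports Main
begin

definition mv_algebra :: "('a \<Rightarrow> 'a \<Rightarrow> 'a) \<Rightarrow> ('a \<Rightarrow> 'a) \<Rightarrow> 'a \<Rightarrow> bool" where
  "mv_algebra oplus neg zero \<longleftrightarrow>
     (\<forall>x y z. oplus x (oplus y z) = oplus (oplus x y) z) \<and>
     (\<forall>x y. oplus x y = oplus y x) \<and>
     (\<forall>x. oplus x zero = x) \<and>
     (\<forall>x. neg (neg x) = x) \<and>
     (\<forall>x. oplus x (neg zero) = neg zero) \<and>
     (\<forall>x y. oplus (neg (oplus (neg x) y)) y = oplus (neg (oplus (neg y) x)) x)"

definition mv_odot :: "('a \<Rightarrow> 'a \<Rightarrow> 'a) \<Rightarrow> ('a \<Rightarrow> 'a) \<Rightarrow> 'a \<Rightarrow> 'a \<Rightarrow> 'a" where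
  "mv_odot oplus neg x y = neg (oplus (neg x) (neg y))"

definition mv_join :: "('a \<Rightarrow> 'a \<Rightarrow> 'a) \<Rightarrow> ('a \<Rightarrow> 'a) \<Rightarrow> 'a \<Rightarrow> 'a \<Rightarrow> 'a" where
  "mv_join oplus neg x y = oplus (mv_odot oplus neg x (neg y)) y"

definition mv_derivations :: "('a \<Rightarrow> 'a \<Rightarrow> 'a) \<Rightarrow> ('a \<Rightarrow> 'a) \<Rightarrow> ('a \<Rightarrow> 'a) set" where
  "mv_derivations oplus neg =
     {d. \<forall>x y. d (mv_odot oplus neg x y) =
                mv_join oplus neg (mv_odot oplus neg (d x) y) (mv_odot oplus neg x (d y))}"

end

theory Submission imports Defs begin

locale mv =
  fixes oplus :: "'a \<Rightarrow> 'a \<Rightarrow> 'a" and neg :: "'a \<Rightarrow> 'a" and zero :: 'a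
  assumes ax1: "oplus x (oplus y z) = oplus (oplus x y) z"
    and ax2: "oplus x y = oplus y x"
    and ax3: "oplus x zero = x"
    and ax4: "neg (neg x) = x"
    and ax5: "oplus x (neg zero) = neg zero"
    and ax6: "oplus (neg (oplus (neg x) y)) y = oplus (neg (oplus (neg y) x)) x"
begin

abbreviation "one \<equiv> neg zero"
abbreviation "M \<equiv> mv_odot oplus neg"
abbreviation "J \<equiv> mv_join oplus neg"
definition le where "le x y \<longleftrightarrow> M x (neg y) = zero"

lemma zplus: "oplus zero x = x" by (metis ax2 ax3)
lemma plus_one: "oplus x one = one" by (rule ax5)
lemma neg_one: "neg one = zero" by (rule ax4)
lemma neg_inj: "neg x = neg y \<Longrightarrow> x = y" by (metis ax4)
lemma plus_neg: "oplus x (neg x) = one"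
  using ax6[of x one] by (simp add: plus_one ax2 neg_one zplus ax3)
lemma Mdef: "M x y = neg (oplus (neg x) (neg y))" by (simp add: mv_odot_def)
lemma M_comm: "M x y = M y x" by (simp add: Mdef ax2)
lemma M_assoc: "M (M x y) z = M x (M y z)" by (simp add: Mdef ax4 ax1)
lemma M_one: "M x one = x" by (simp add: Mdef ax4 ax3)
lemma one_M: "M one x = x" by (simp add: M_comm M_one)
lemma M_zero: "M x zero = zero" by (simp add: Mdef neg_one plus_one)
lemma zero_M: "M zero x = zero" by (simp add: M_comm M_zero)
lemma M_neg: "M x (neg x) = zero" by (simp add: Mdef ax4 ax2 plus_neg neg_one)
lemma oplus_eq_zero: "oplus a b = zero \<Longrightarrow> a = zero"
proof -
  assume h: "oplus a b = zero"
  have "oplus (neg a) (oplus a b) = one"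
    by (metis ax1 ax2 plus_neg plus_one)
  then have "neg a = one" using h ax3 by simp
  then show ?thesis by (metis ax4)
qed
lemma M_eq_one: "M x y = one \<Longrightarrow> x = one"
proof -
  assume "M x y = one"
  then have "oplus (neg x) (neg y) = zero" unfolding Mdef by (metis ax4)
  then have "neg x = zero" by (rule oplus_eq_zero)
  then show ?thesis by (metis ax4)
qed
lemma le_iff: "le x y \<longleftrightarrow> oplus (neg x) y = one"
  unfolding le_def Mdef by (metis ax4)
lemma Jdef: "J x y = oplus (neg (oplus (neg x) y)) y"
  by (simp add: mv_join_def Mdef ax4)
lemma J_comm: "J x y = J y x" by (simp add: Jdef ax6)
lemma J_le: "le a b \<Longrightarrow> J a b = b" by (simp add: le_iff Jdef neg_one zplus)
lemma J_le2: "le a b \<Longrightarrow> J b a = b" by (simp add: J_comm J_le)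
lemma le_refl: "le a a" by (simp add: le_iff ax2 plus_neg)
lemma J_idem: "J a a = a" by (simp add: J_le le_refl)
lemma le_antisym: "le a b \<Longrightarrow> le b a \<Longrightarrow> a = b" by (metis J_le J_comm)
lemma J_zero: "J a b = zero \<Longrightarrow> a = zero"
proof -
  assume h: "J a b = zero"
  then have "b = zero" unfolding Jdef by (metis ax2 oplus_eq_zero)
  with h show ?thesis by (simp add: mv_join_def M_one ax3)
qed
lemma le_J: "le b (J a b)"
proof -
  have "oplus (neg b) (J a b) = one" unfolding mv_join_def
    by (metis ax1 ax2 plus_neg plus_one)
  then show ?thesis by (simp add: le_iff)
qed
lemma zero_le: "le zero x" by (simp add: le_def zero_M)
lemma le_one: "le x one" by (simp add: le_def ax4 M_zero)
lemma le_zero: "le x zero \<Longrightarrow> x = zero" by (simp add: le_def M_one)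
lemma one_le: "le one x \<Longrightarrow> x = one" by (metis le_antisym le_one)
lemma M_mono: "le e c \<Longrightarrow> le (M e y) (M c y)"
proof -
  assume "le e c"
  then have h: "oplus (neg e) c = one" by (simp add: le_iff)
  have "oplus (neg y) (M c y) = oplus (neg (oplus y c)) c"
    using ax6[of c "neg y"] by (simp add: Mdef ax4 ax2)
  then have "oplus (neg (M e y)) (M c y) = oplus (oplus (neg e) c) (neg (oplus y c))"
    by (simp add: Mdef ax4 ax1[symmetric]) (metis ax1 ax2)
  then show ?thesis using h by (simp add: le_iff) (metis ax2 plus_one)
qed

abbreviation "D \<equiv> mv_derivations oplus neg"
definition fam where "fam c e = (\<lambda>x. if x = one then e else M c x)"

lemma derD: "d \<in> D \<Longrightarrow> d (M x y) = J (M (d x) y) (M x (d y))"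
  by (simp add: mv_derivations_def)

lemma fam_der: assumes "le e c" shows "fam c e \<in> D"
  unfolding mv_derivations_def
proof (intro CollectI allI)
  fix x y
  show "fam c e (M x y) = J (M (fam c e x) y) (M x (fam c e y))"
  proof (cases "x = one")
    case True
    then show ?thesis
    proof (cases "y = one")
      case True
      with \<open>x = one\<close> show ?thesis by (simp add: fam_def M_one one_M J_idem)
    next
      case False
      have "le (M e y) (M c y)" using assms by (rule M_mono)
      then show ?thesis using True False by (simp add: fam_def M_one one_M J_le)
    qed
  next
    case False
    then show ?thesis
    proof (cases "y = one")
      case True
      have "le (M e x) (M c x)" using assms by (rule M_mono)
      then show ?thesis using True False by (simp add: fam_def M_one one_M J_le2 M_comm)
    next
      case False
      have "M x y \<noteq> one" using \<open>x \<noteq> one\<close> M_eq_one by blast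
      have e: "M x (M c y) = M c (M x y)"
        by (metis M_assoc M_comm)
      show ?thesis using \<open>M x y \<noteq> one\<close> \<open>x \<noteq> one\<close> False
        by (simp add: fam_def e M_assoc J_idem)
    qed
  qed
qed

lemma der_zero: "d \<in> D \<Longrightarrow> d zero = zero"
  using derD[of d zero zero] by (simp add: M_zero zero_M J_idem)

lemma der_le: "d \<in> D \<Longrightarrow> le (d x) x"
proof -
  assume d: "d \<in> D"
  have "zero = J (M (d x) (neg x)) (M x (d (neg x)))"
    using derD[OF d, of x "neg x"] der_zero[OF d] by (simp add: M_neg)
  then have "M (d x) (neg x) = zero" using J_zero by metis
  then show ?thesis by (simp add: le_def)
qed

lemma der_ge: "d \<in> D \<Longrightarrow> le (M x (d one)) (d x)"
proof -
  assume d: "d \<in> D"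
  have "d x = J (d x) (M x (d one))"
    using derD[OF d, of x one] by (simp add: M_one)
  then show ?thesis by (metis le_J)
qed


lemma oplus_M: "oplus x y = neg (M (neg x) (neg y))" by (simp add: Mdef ax4)
lemma le_M: "le (M x y) x" unfolding le_def by (metis M_assoc M_comm M_neg M_zero)
lemma fam_c: "fam c c = M c" by (rule ext) (simp add: fam_def M_one)

lemma card_via: "inj_on f A \<Longrightarrow> f ` A = T \<Longrightarrow> card A = card T"
  by (metis card_image)

lemma der_ext:
  assumes "d \<in> D" "d' \<in> D" "\<And>x. x \<noteq> zero \<Longrightarrow> d x = d' x"
  shows "d = d'"
proof (rule ext)
  fix x show "d x = d' x"
    using assms der_zero[OF assms(1)] der_zero[OF assms(2)] by (cases "x = zero") auto
qed

lemma two_case: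
  assumes U: "UNIV = {zero, one}" and nz: "zero \<noteq> one"
  shows "card D = 2"
proof -
  have inj: "inj_on (\<lambda>d. d one) D"
    unfolding inj_on_def
  proof (intro ballI impI)
    fix d d' assume "d \<in> D" "d' \<in> D" "d one = d' one"
    then show "d = d'"
      by (intro der_ext) (use U in auto)
  qed
  have "(\<lambda>d. d one) ` D = {zero, one}"
  proof
    show "(\<lambda>d. d one) ` D \<subseteq> {zero, one}" using U by auto
    have "fam zero zero \<in> D" "fam one one \<in> D" by (auto intro: fam_der le_refl)
    moreover have "zero = (\<lambda>d. d one) (fam zero zero)" "one = (\<lambda>d. d one) (fam one one)"
      by (auto simp: fam_def)
    ultimately show "{zero, one} \<subseteq> (\<lambda>d. d one) ` D"
      by (metis (no_types, lifting) empty_subsetI image_eqI insert_subset)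
  qed
  then have "card D = card {zero, one}" using card_via[OF inj] by blast
  then show ?thesis using nz by simp
qed

lemma three_case:
  assumes U: "UNIV = {zero, m, one}" and nz: "zero \<noteq> one" "m \<noteq> zero" "m \<noteq> one"
  shows "card D = 5"
proof -
  have nm: "neg m = m"
  proof -
    have "neg m \<in> {zero, m, one}" using U by blast
    moreover have "neg m \<noteq> zero" using nz ax4 by metis
    moreover have "neg m \<noteq> one" using nz ax4 by metis
    ultimately show ?thesis by blast
  qed
  have mm: "M m m = zero" using M_neg[of m] nm by simp
  have inj: "inj_on (\<lambda>d. (d m, d one)) D"
    unfolding inj_on_def
  proof (intro ballI impI)
    fix d d' assume "d \<in> D" "d' \<in> D" "(d m, d one) = (d' m, d' one)"
    then show "d = d'"
      by (intro der_ext) (use U in auto)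
  qed
  let ?T = "{(zero,zero),(zero,m),(m,zero),(m,m),(m,one)}"
  have "(\<lambda>d. (d m, d one)) ` D = ?T"
  proof
    show "(\<lambda>d. (d m, d one)) ` D \<subseteq> ?T"
    proof
      fix t assume "t \<in> (\<lambda>d. (d m, d one)) ` D"
      then obtain d where d: "d \<in> D" and t: "t = (d m, d one)" by blast
      have a: "le (d m) m" using der_le[OF d] .
      have b: "le (M m (d one)) (d m)" using der_ge[OF d] .
      have c1: "d m \<in> {zero, m, one}" "d one \<in> {zero, m, one}" using U by blast+
      have "d m \<noteq> one" using a one_le nz by metis
      moreover have "d one = one \<Longrightarrow> d m \<noteq> zero" using b le_zero nz M_one by metis
      ultimately show "t \<in> ?T" using c1 t by auto
    qed
    have f: "fam zero zero \<in> D" "fam m m \<in> D" "fam one zero \<in> D" "fam one m \<in> D" "fam one one \<in> D"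
      by (auto intro: fam_der le_refl zero_le le_one)
    show "?T \<subseteq> (\<lambda>d. (d m, d one)) ` D"
    proof -
      have "(zero,zero) = (\<lambda>d. (d m, d one)) (fam zero zero)"
           "(zero,m) = (\<lambda>d. (d m, d one)) (fam m m)"
           "(m,zero) = (\<lambda>d. (d m, d one)) (fam one zero)"
           "(m,m) = (\<lambda>d. (d m, d one)) (fam one m)"
           "(m,one) = (\<lambda>d. (d m, d one)) (fam one one)"
        using nz by (auto simp: fam_def mm zero_M one_M)
      then show ?thesis using f by (metis (no_types, lifting) empty_subsetI image_eqI insert_subset)
    qed
  qed
  then have "card D = card ?T" using card_via[OF inj] by blast
  then show ?thesis using nz by simp
qed


lemma card9: "distinct [t1,t2,t3,t4,t5,t6,t7,t8,t9::'b] \<Longrightarrow> card {t1,t2,t3,t4,t5,t6,t7,t8,t9} = 9"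
proof -
  assume h: "distinct [t1,t2,t3,t4,t5,t6,t7,t8,t9]"
  have "card (set [t1,t2,t3,t4,t5,t6,t7,t8,t9]) = length [t1,t2,t3,t4,t5,t6,t7,t8,t9]"
    using h by (rule distinct_card)
  also have "length [t1,t2,t3,t4,t5,t6,t7,t8,t9] = 9" by simp
  also have "set [t1,t2,t3,t4,t5,t6,t7,t8,t9] = {t1,t2,t3,t4,t5,t6,t7,t8,t9}" by (simp only: list.set)
  finally show ?thesis .
qed

lemma chain_case:
  assumes U: "UNIV = {zero, a, b, one}" and nz: "zero \<noteq> one" "a \<noteq> zero" "a \<noteq> one"
    "b \<noteq> zero" "b \<noteq> one" "a \<noteq> b"
    and na: "neg a = b" and nb: "neg b = a" and aa: "M a a = zero" and bb: "M b b = a"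
    and ab: "M a b = zero"
  shows "card D = 9"
proof -
  have ba: "M b a = zero" using ab M_comm by metis
  have inj: "inj_on (\<lambda>d. (d a, d b, d one)) D"
    unfolding inj_on_def
  proof (intro ballI impI)
    fix d d' assume h: "d \<in> D" "d' \<in> D" "(d a, d b, d one) = (d' a, d' b, d' one)"
    show "d = d'"
    proof (rule der_ext[OF h(1,2)])
      fix x assume "x \<noteq> zero"
      moreover have "x \<in> {zero, a, b, one}" using U by blast
      ultimately have "x = a \<or> x = b \<or> x = one" by blast
      then show "d x = d' x" using h(3) by auto
    qed
  qed
  let ?T = "{(zero,zero,zero),(zero,zero,a),(zero,a,zero),(zero,a,a),(zero,a,b),
             (a,b,zero),(a,b,a),(a,b,b),(a,b,one)}"
  have lab: "le a b" using aa nb by (simp add: le_def)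
  have nlba: "\<not> le b a" using bb na nz by (simp add: le_def)
  have nl1: "\<not> le one x" if "x \<noteq> one" for x using one_le that by blast
  have nl0: "\<not> le x zero" if "x \<noteq> zero" for x using le_zero that by blast
  have "(\<lambda>d. (d a, d b, d one)) ` D = ?T"
  proof
    show "(\<lambda>d. (d a, d b, d one)) ` D \<subseteq> ?T"
    proof
      fix t assume "t \<in> (\<lambda>d. (d a, d b, d one)) ` D"
      then obtain d where d: "d \<in> D" and t: "t = (d a, d b, d one)" by blast
      have A: "le (d a) a" "le (d b) b" using der_le[OF d] by auto
      have B: "le (M a (d one)) (d a)" "le (M b (d one)) (d b)" using der_ge[OF d] by auto
      have C: "d a = M (d b) b" using derD[OF d, of b b] bb by (metis J_idem M_comm)
      have c1: "d a \<in> {zero, a, b, one}" "d b \<in> {zero, a, b, one}" "d one \<in> {zero, a, b, one}"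
        using U by blast+
      have db: "d b \<in> {zero, a, b}" using c1(2) A(2) nl1 nz by auto
      have da: "d a = (if d b = zero then zero else if d b = a then zero else a)"
        using C db by (auto simp: zero_M ab bb)
      from c1(3) consider "d one = zero" | "d one = a" | "d one = b" | "d one = one" by blast
      then show "t \<in> ?T"
      proof cases
        case 1 then show ?thesis using db da t nz by auto
      next
        case 2 then show ?thesis using db da t nz by auto
      next
        case 3
        then have "le a (d b)" using B(2) bb by simp
        then have "d b \<noteq> zero" using nl0[OF nz(2)] by metis
        then show ?thesis using db da t 3 nz by auto
      next
        case 4
        then have lb: "le b (d b)" using B(2) M_one by simp
        have "d b \<noteq> zero" using lb nl0[OF nz(4)] by metis
        moreover have "d b \<noteq> a" using lb nlba by metis
        ultimately have "d b = b" using db by blast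
        moreover then have "d a = a" using da nz by simp
        ultimately show ?thesis using t 4 by simp
      qed
    qed
    have f: "fam zero zero \<in> D" "fam a a \<in> D" "fam b zero \<in> D" "fam b a \<in> D" "fam b b \<in> D"
      "fam one zero \<in> D" "fam one a \<in> D" "fam one b \<in> D" "fam one one \<in> D"
      by (auto intro: fam_der le_refl zero_le le_one lab)
    have "(zero,zero,zero) = (\<lambda>d. (d a, d b, d one)) (fam zero zero)"
         "(zero,zero,a) = (\<lambda>d. (d a, d b, d one)) (fam a a)"
         "(zero,a,zero) = (\<lambda>d. (d a, d b, d one)) (fam b zero)"
         "(zero,a,a) = (\<lambda>d. (d a, d b, d one)) (fam b a)"
         "(zero,a,b) = (\<lambda>d. (d a, d b, d one)) (fam b b)"
         "(a,b,zero) = (\<lambda>d. (d a, d b, d one)) (fam one zero)"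
         "(a,b,a) = (\<lambda>d. (d a, d b, d one)) (fam one a)"
         "(a,b,b) = (\<lambda>d. (d a, d b, d one)) (fam one b)"
         "(a,b,one) = (\<lambda>d. (d a, d b, d one)) (fam one one)"
      using nz by (auto simp: fam_def aa ab ba bb zero_M one_M)
    note w = this
    show "?T \<subseteq> (\<lambda>d. (d a, d b, d one)) ` D"
      using image_eqI[of _ "\<lambda>d. (d a, d b, d one)", OF w(1) f(1)] image_eqI[of _ "\<lambda>d. (d a, d b, d one)", OF w(2) f(2)] image_eqI[of _ "\<lambda>d. (d a, d b, d one)", OF w(3) f(3)]
        image_eqI[of _ "\<lambda>d. (d a, d b, d one)", OF w(4) f(4)] image_eqI[of _ "\<lambda>d. (d a, d b, d one)", OF w(5) f(5)] image_eqI[of _ "\<lambda>d. (d a, d b, d one)", OF w(6) f(6)]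
        image_eqI[of _ "\<lambda>d. (d a, d b, d one)", OF w(7) f(7)] image_eqI[of _ "\<lambda>d. (d a, d b, d one)", OF w(8) f(8)] image_eqI[of _ "\<lambda>d. (d a, d b, d one)", OF w(9) f(9)]
      by (simp only: insert_subset empty_subsetI simp_thms)
  qed
  then have "card D = card ?T" using card_via[OF inj] by blast
  moreover have "card ?T = 9" by (rule card9) (use nz in auto)
  ultimately show ?thesis by (rule trans)
qed

lemma bool_case:
  assumes U: "UNIV = {zero, a, b, one}" and nz: "zero \<noteq> one" "a \<noteq> zero" "a \<noteq> one"
    "b \<noteq> zero" "b \<noteq> one" "a \<noteq> b"
    and na: "neg a = b" and nb: "neg b = a" and aa: "M a a = a" and bb: "M b b = b"
    and ab: "M a b = zero"
  shows "card D = 9"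
proof -
  have ba: "M b a = zero" using ab M_comm by metis
  have inj: "inj_on (\<lambda>d. (d a, d b, d one)) D"
    unfolding inj_on_def
  proof (intro ballI impI)
    fix d d' assume h: "d \<in> D" "d' \<in> D" "(d a, d b, d one) = (d' a, d' b, d' one)"
    show "d = d'"
    proof (rule der_ext[OF h(1,2)])
      fix x assume "x \<noteq> zero"
      moreover have "x \<in> {zero, a, b, one}" using U by blast
      ultimately have "x = a \<or> x = b \<or> x = one" by blast
      then show "d x = d' x" using h(3) by auto
    qed
  qed
  let ?T = "{(zero,zero,zero),(a,zero,zero),(a,zero,a),(zero,b,zero),(zero,b,b),
             (a,b,zero),(a,b,a),(a,b,b),(a,b,one)}"
  have nlba: "\<not> le b a" using bb na nz by (simp add: le_def)
  have nlab: "\<not> le a b" using aa nb nz by (simp add: le_def)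
  have nl1: "\<not> le one x" if "x \<noteq> one" for x using one_le that by blast
  have nl0: "\<not> le x zero" if "x \<noteq> zero" for x using le_zero that by blast
  have "(\<lambda>d. (d a, d b, d one)) ` D = ?T"
  proof
    show "(\<lambda>d. (d a, d b, d one)) ` D \<subseteq> ?T"
    proof
      fix t assume "t \<in> (\<lambda>d. (d a, d b, d one)) ` D"
      then obtain d where d: "d \<in> D" and t: "t = (d a, d b, d one)" by blast
      have A: "le (d a) a" "le (d b) b" using der_le[OF d] by auto
      have B: "le (M a (d one)) (d a)" "le (M b (d one)) (d b)" using der_ge[OF d] by auto
      have c1: "d a \<in> {zero, a, b, one}" "d b \<in> {zero, a, b, one}" "d one \<in> {zero, a, b, one}"
        using U by blast+
      have db: "d b \<in> {zero, b}" using c1(2) A(2) nl1 nz nlab by auto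
      have da: "d a \<in> {zero, a}" using c1(1) A(1) nl1 nz nlba by auto
      from c1(3) consider "d one = zero" | "d one = a" | "d one = b" | "d one = one" by blast
      then show "t \<in> ?T"
      proof cases
        case 1 then show ?thesis using db da t nz by auto
      next
        case 2
        then have "le a (d a)" using B(1) aa by simp
        then have "d a = a" using da nl0[OF nz(2)] by auto
        then show ?thesis using db t 2 by auto
      next
        case 3
        then have "le b (d b)" using B(2) bb by simp
        then have "d b = b" using db nl0[OF nz(4)] by auto
        then show ?thesis using da t 3 by auto
      next
        case 4
        then have "le b (d b)" "le a (d a)" using B M_one by simp_all
        then have "d b = b" "d a = a" using db da nl0[OF nz(4)] nl0[OF nz(2)] by auto
        then show ?thesis using t 4 by auto
      qed
    qed
    have f: "fam zero zero \<in> D" "fam a zero \<in> D" "fam a a \<in> D" "fam b zero \<in> D" "fam b b \<in> D"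
      "fam one zero \<in> D" "fam one a \<in> D" "fam one b \<in> D" "fam one one \<in> D"
      by (auto intro: fam_der le_refl zero_le le_one)
    have "(zero,zero,zero) = (\<lambda>d. (d a, d b, d one)) (fam zero zero)"
         "(a,zero,zero) = (\<lambda>d. (d a, d b, d one)) (fam a zero)"
         "(a,zero,a) = (\<lambda>d. (d a, d b, d one)) (fam a a)"
         "(zero,b,zero) = (\<lambda>d. (d a, d b, d one)) (fam b zero)"
         "(zero,b,b) = (\<lambda>d. (d a, d b, d one)) (fam b b)"
         "(a,b,zero) = (\<lambda>d. (d a, d b, d one)) (fam one zero)"
         "(a,b,a) = (\<lambda>d. (d a, d b, d one)) (fam one a)"
         "(a,b,b) = (\<lambda>d. (d a, d b, d one)) (fam one b)"
         "(a,b,one) = (\<lambda>d. (d a, d b, d one)) (fam one one)"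
      using nz by (auto simp: fam_def aa ab ba bb zero_M one_M)
    note w = this
    show "?T \<subseteq> (\<lambda>d. (d a, d b, d one)) ` D"
      using image_eqI[of _ "\<lambda>d. (d a, d b, d one)", OF w(1) f(1)] image_eqI[of _ "\<lambda>d. (d a, d b, d one)", OF w(2) f(2)] image_eqI[of _ "\<lambda>d. (d a, d b, d one)", OF w(3) f(3)]
        image_eqI[of _ "\<lambda>d. (d a, d b, d one)", OF w(4) f(4)] image_eqI[of _ "\<lambda>d. (d a, d b, d one)", OF w(5) f(5)] image_eqI[of _ "\<lambda>d. (d a, d b, d one)", OF w(6) f(6)]
        image_eqI[of _ "\<lambda>d. (d a, d b, d one)", OF w(7) f(7)] image_eqI[of _ "\<lambda>d. (d a, d b, d one)", OF w(8) f(8)] image_eqI[of _ "\<lambda>d. (d a, d b, d one)", OF w(9) f(9)]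
      by (simp only: insert_subset empty_subsetI simp_thms)
  qed
  then have "card D = card ?T" using card_via[OF inj] by blast
  moreover have "card ?T = 9" by (rule card9) (use nz in auto)
  ultimately show ?thesis by (rule trans)
qed


lemma four_case:
  assumes U: "UNIV = {zero, p, q, one}" and nz: "zero \<noteq> one" "p \<noteq> zero" "p \<noteq> one"
    "q \<noteq> zero" "q \<noteq> one" "p \<noteq> q"
  shows "card D = 9"
proof -
  have nl1: "\<not> le one x" if "x \<noteq> one" for x using one_le that by blast
  have np: "neg p = p \<or> neg p = q"
  proof -
    have "neg p \<in> {zero, p, q, one}" using U by blast
    moreover have "neg p \<noteq> zero" using nz ax4 by metis
    moreover have "neg p \<noteq> one" using nz ax4 by metis
    ultimately show ?thesis by blast
  qed
  have nq: "neg q = p \<or> neg q = q"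
  proof -
    have "neg q \<in> {zero, p, q, one}" using U by blast
    moreover have "neg q \<noteq> zero" using nz ax4 by metis
    moreover have "neg q \<noteq> one" using nz ax4 by metis
    ultimately show ?thesis by blast
  qed
  have pq_le: "le (M p q) p" "le (M p q) q" using le_M M_comm by metis+
  show ?thesis
  proof (cases "neg p = p")
    case True
    then have nqq: "neg q = q" using nq nz ax4 by metis
    have "M p q \<in> {zero, p, q, one}" using U by blast
    moreover have "M p q \<noteq> one" using pq_le nl1 nz by metis
    moreover have "M p q \<noteq> p"
    proof
      assume h: "M p q = p"
      then have "le p q" using pq_le by simp
      then have "M p q = zero" using nqq by (simp add: le_def)
      then show False using h nz by simp
    qed
    moreover have "M p q \<noteq> q"
    proof
      assume h: "M p q = q"
      then have "le q p" using pq_le by simp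
      then have "M q p = zero" using True by (simp add: le_def)
      then show False using h nz M_comm by metis
    qed
    moreover have "M p q \<noteq> zero"
    proof
      assume h: "M p q = zero"
      then have "le p q" using nqq by (simp add: le_def)
      moreover have "le q p" using h True M_comm by (metis le_def)
      ultimately show False using le_antisym nz by blast
    qed
    ultimately show ?thesis by blast
  next
    case False
    then have npq: "neg p = q" using np by blast
    then have nqp: "neg q = p" using ax4 by metis
    have ab: "M p q = zero" using M_neg npq by metis
    have ba: "M q p = zero" using ab M_comm by metis
    have pp: "M p p = zero \<or> M p p = p \<or> M p p = q"
    proof -
      have "M p p \<in> {zero, p, q, one}" using U by blast
      moreover have "M p p \<noteq> one" using le_M[of p p] nl1 nz by metis
      ultimately show ?thesis by blast
    qed
    have qq: "M q q = zero \<or> M q q = p \<or> M q q = q"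
    proof -
      have "M q q \<in> {zero, p, q, one}" using U by blast
      moreover have "M q q \<noteq> one" using le_M[of q q] nl1 nz by metis
      ultimately show ?thesis by blast
    qed
    have Jpq: "J p q = oplus (M p p) q" using nqp by (simp add: mv_join_def)
    have Jqp: "J q p = oplus (M q q) p" using npq by (simp add: mv_join_def)
    have opq: "oplus p q = one" "oplus q p = one"
      using oplus_M[of p q] oplus_M[of q p] npq nqp ab ba by simp_all
    have U': "UNIV = {zero, q, p, one}" using U by (simp add: insert_commute)
    from pp show ?thesis
    proof (elim disjE)
      assume pp0: "M p p = zero"
      from qq show ?thesis
      proof (elim disjE)
        assume "M q q = zero"
        then have "le p q" "le q p" using pp0 npq nqp by (simp_all add: le_def)
        then show ?thesis using le_antisym nz by blast
      next
        assume "M q q = p"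
        then show ?thesis by (rule chain_case[OF U nz npq nqp pp0 _ ab])
      next
        assume "M q q = q"
        then have "q = one" using J_comm[of p q] Jpq Jqp pp0 opq zplus by metis
        then show ?thesis using nz by blast
      qed
    next
      assume pp1: "M p p = p"
      from qq show ?thesis
      proof (elim disjE)
        assume "M q q = zero"
        then have "p = one" using J_comm[of p q] Jpq Jqp pp1 opq zplus by metis
        then show ?thesis using nz by blast
      next
        assume "M q q = p"
        then have "M p p = zero" by (metis M_assoc ab M_comm M_zero zero_M)
        then show ?thesis using pp1 nz by simp
      next
        assume "M q q = q"
        then show ?thesis by (rule bool_case[OF U nz npq nqp pp1 _ ab])
      qed
    next
      assume pp2: "M p p = q"
      from qq show ?thesis
      proof (elim disjE)
        assume "M q q = zero"
        then show ?thesis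
          by (rule chain_case[OF U' nz(1,4,5,2,3) not_sym[OF nz(6)] nqp npq _ pp2 ba])
      next
        assume h: "M q q = p"
        have "M q q = M q (M p p)" using pp2 by simp
        also have "\<dots> = M (M q p) p" by (simp add: M_assoc)
        finally have "p = zero" using h ba zero_M by simp
        then show ?thesis using nz by simp
      next
        assume h: "M q q = q"
        have "M q q = M (M p p) q" using pp2 by simp
        also have "\<dots> = M p (M p q)" by (simp add: M_assoc)
        finally have "q = zero" using h ab M_zero by simp
        then show ?thesis using nz by simp
      qed
    qed
  qed
qed


lemma M_in_D: "M c \<in> D" using fam_der[OF le_refl[of c]] fam_c by simp

lemma inj_M: "inj M"
proof (rule injI)
  fix x y assume "M x = M y"
  then have "M x one = M y one" by simp
  then show "x = y" by (simp add: M_one)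
qed

lemma infinite_D: "infinite (UNIV :: 'a set) \<Longrightarrow> infinite D"
proof -
  assume inf: "infinite (UNIV :: 'a set)"
  have "infinite (range M)" using inf inj_M finite_imageD by blast
  moreover have "range M \<subseteq> D" using M_in_D by blast
  ultimately show ?thesis using finite_subset by blast
qed

lemma mids_neg:
  assumes all0: "\<And>c x. c \<noteq> zero \<Longrightarrow> c \<noteq> one \<Longrightarrow> x \<noteq> one \<Longrightarrow> M c x = zero"
    and u: "u \<noteq> zero" "u \<noteq> one" and v: "v \<noteq> zero" "v \<noteq> one"
  shows "u = neg v"
proof -
  have "M u v = zero" using all0 u v by blast
  then have l1: "le u (neg v)" by (simp add: le_def ax4)
  have nv: "neg v \<noteq> zero" "neg v \<noteq> one" using v ax4 by metis+
  have nu: "neg u \<noteq> one" using u ax4 by metis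
  have "M (neg v) (neg u) = zero" using all0 nv nu by blast
  then have l2: "le (neg v) u" by (simp add: le_def ax4)
  show ?thesis using le_antisym l1 l2 by blast
qed

lemma big_case:
  assumes fin: "finite (UNIV :: 'a set)" and finD: "finite D" and nz: "zero \<noteq> one"
    and cd: "c \<noteq> d" "c \<noteq> zero" "c \<noteq> one" "d \<noteq> zero" "d \<noteq> one"
  shows "2 * card (UNIV :: 'a set) \<le> card D"
proof -
  obtain c0 x0 where c0: "c0 \<noteq> zero" "c0 \<noteq> one" "x0 \<noteq> one" "M c0 x0 \<noteq> zero"
  proof -
    have "\<exists>c0 x0. c0 \<noteq> zero \<and> c0 \<noteq> one \<and> x0 \<noteq> one \<and> M c0 x0 \<noteq> zero"
    proof (rule ccontr)
      assume "\<not> ?thesis"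
      then have all0: "\<And>c x. c \<noteq> zero \<Longrightarrow> c \<noteq> one \<Longrightarrow> x \<noteq> one \<Longrightarrow> M c x = zero" by blast
      have "c = neg d" using mids_neg[OF all0] cd by blast
      moreover have "c = neg c" using mids_neg[OF all0] cd by blast
      ultimately show False using cd ax4 by metis
    qed
    then show ?thesis using that by blast
  qed
  let ?M2 = "(\<lambda>b. fam one b) ` (UNIV - {one})"
  let ?f0 = "fam c0 zero"
  have inj2: "inj_on (\<lambda>b. fam one b) (UNIV - {one})"
    by (rule inj_onI) (metis fam_def)
  have c1: "card (range M) = card (UNIV :: 'a set)" using inj_M by (simp add: card_image)
  have c2: "card ?M2 = card (UNIV :: 'a set) - 1"
    using card_image[OF inj2] fin by (simp add: card_Diff_singleton)
  have disj12: "range M \<inter> ?M2 = {}"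
  proof (rule ccontr)
    assume "range M \<inter> ?M2 \<noteq> {}"
    then obtain c' b where b: "b \<noteq> one" and e: "M c' = fam one b" by blast
    have "c' = b" using fun_cong[OF e, of one] by (simp add: fam_def M_one)
    then have e2: "\<And>x. x \<noteq> one \<Longrightarrow> M b x = x" using e by (metis fam_def one_M)
    show False
    proof (cases "b = zero")
      case True
      then show False using e2[of c] cd zero_M by metis
    next
      case False
      then have "neg b \<noteq> one" using ax4 by metis
      then have "M b (neg b) = neg b" by (rule e2)
      then have "neg b = zero" using M_neg by simp
      then show False using b ax4 by metis
    qed
  qed
  have f0M: "?f0 \<notin> range M"
  proof
    assume "?f0 \<in> range M"
    then obtain c' where e: "fam c0 zero = M c'" by blast
    have "c' = zero" using fun_cong[OF e, of one] by (simp add: fam_def M_one)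
    then have "M c0 x0 = zero" using fun_cong[OF e, of x0] c0 by (simp add: fam_def zero_M)
    then show False using c0 by simp
  qed
  have f0M2: "?f0 \<notin> ?M2"
  proof
    assume "?f0 \<in> ?M2"
    then obtain b where e: "fam c0 zero = fam one b" by blast
    have nc: "neg c0 \<noteq> one" using c0 ax4 by metis
    have "M c0 (neg c0) = M one (neg c0)" using fun_cong[OF e, of "neg c0"] nc by (simp add: fam_def)
    then have "neg c0 = zero" using M_neg one_M by metis
    then show False using c0 ax4 by metis
  qed
  have sub: "range M \<union> ?M2 \<union> {?f0} \<subseteq> D"
    using M_in_D fam_der[OF le_one] fam_der[OF zero_le] by blast
  have fin1: "finite (range M)" "finite ?M2" using fin by auto
  have "card (range M \<union> ?M2 \<union> {?f0}) = card (range M) + card ?M2 + 1"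
    using fin1 disj12 f0M f0M2 by (simp add: card_Un_disjoint)
  also have "\<dots> = 2 * card (UNIV :: 'a set)"
  proof -
    have "card (UNIV :: 'a set) \<ge> 1" using fin by (simp add: Suc_le_eq finite_UNIV_card_ge_0)
    then show ?thesis using c1 c2 by simp
  qed
  finally show ?thesis using card_mono[OF finD sub] by simp
qed

end

theorem main_mv:
  fixes oplus :: "'a \<Rightarrow> 'a \<Rightarrow> 'a" and neg :: "'a \<Rightarrow> 'a" and zero :: 'a
  assumes "mv_algebra oplus neg zero"
    and "zero \<noteq> neg zero"
  shows "(card (mv_derivations oplus neg) = 2 \<longleftrightarrow> card (UNIV :: 'a set) = 2) \<and>
         (card (mv_derivations oplus neg) = 5 \<longleftrightarrow> card (UNIV :: 'a set) = 3) \<and>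
         (card (mv_derivations oplus neg) = 9 \<longleftrightarrow> card (UNIV :: 'a set) = 4)"
proof -
  interpret mv oplus neg zero
    using assms(1) unfolding mv_algebra_def by unfold_locales blast+
  have nz: "zero \<noteq> one" by (rule assms(2))
  let ?n = "card (UNIV :: 'a set)"
  let ?S = "UNIV - {zero, one}"
  show ?thesis
  proof (cases "finite (UNIV :: 'a set)")
    case False
    then have "card D = 0" using infinite_D by simp
    moreover have "?n = 0" using False by simp
    ultimately show ?thesis by simp
  next
    case fin: True
    have Ueq: "UNIV = insert zero (insert one ?S)" by blast
    have cS: "card ?S = ?n - 2" using fin nz by (simp add: card_Diff_subset)
    have n2: "?n \<ge> 2"
    proof -
      have "card {zero, one} \<le> ?n" using fin by (rule card_mono) simp
      then show ?thesis using nz by simp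
    qed
    consider "?n = 2" | "?n = 3" | "?n = 4" | "?n \<ge> 5" using n2 by linarith
    then show ?thesis
    proof cases
      case 1
      then have "?S = {}" using cS fin by simp
      then have "UNIV = {zero, one}" by blast
      then have "card D = 2" using two_case nz by blast
      then show ?thesis using 1 by simp
    next
      case 2
      then have "card ?S = 1" using cS by simp
      then obtain m where "?S = {m}" by (metis card_1_singletonE)
      then have "UNIV = {zero, m, one}" "m \<noteq> zero" "m \<noteq> one" using Ueq by auto
      then have "card D = 5" using three_case nz by blast
      then show ?thesis using 2 by simp
    next
      case 3
      then have "card ?S = 2" using cS by simp
      then obtain p q where pq: "?S = {p, q}" "p \<noteq> q" by (metis card_2_iff)
      then have "UNIV = {zero, p, q, one}" "p \<noteq> zero" "p \<noteq> one" "q \<noteq> zero" "q \<noteq> one"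
        using Ueq by auto
      then have "card D = 9" using four_case nz pq(2) by blast
      then show ?thesis using 3 by simp
    next
      case 4
      then have cS3: "card ?S \<ge> 3" using cS by simp
      then have "?S \<noteq> {}" by (metis card.empty not_numeral_le_zero)
      then obtain c where c: "c \<in> ?S" by blast
      have "card (?S - {c}) \<ge> 2" using cS3 c fin by (simp add: card_Diff_singleton)
      then have "?S - {c} \<noteq> {}" by (metis card.empty not_numeral_le_zero)
      then obtain d where d: "d \<in> ?S - {c}" by blast
      have "card D \<noteq> 2 \<and> card D \<noteq> 5 \<and> card D \<noteq> 9"
      proof (cases "finite D")
        case True
        have "2 * ?n \<le> card D"
          by (rule big_case[OF fin True nz, of c d]) (use c d in auto)
        then show ?thesis using 4 by simp
      next
        case False
        then show ?thesis by simp
      qed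
      then show ?thesis using 4 by simp
    qed
  qed
qed

theorem proposition3p16:
  fixes oplus :: "'a \<Rightarrow> 'a \<Rightarrow> 'a" and neg :: "'a \<Rightarrow> 'a" and zero :: 'a
  assumes "mv_algebra oplus neg zero"
    and "zero \<noteq> neg zero"
  shows "(card (mv_derivations oplus neg) = 2 \<longleftrightarrow> card (UNIV :: 'a set) = 2) \<and>
         (card (mv_derivations oplus neg) = 5 \<longleftrightarrow> card (UNIV :: 'a set) = 3) \<and>
         (card (mv_derivations oplus neg) = 9 \<longleftrightarrow> card (UNIV :: 'a set) = 4)"
  using main_mv[OF assms] .

end
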